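(* Let $G$ be a dense $K_4^3\cup e$-free $3$-graph on $[n]$ with $\lambda(G)>\frac{\sqrt3}{18}$, and let $\vec x$ be an optimum weight vector for $G$. Then for any two distinct vertices $a,b\in[n]$, $x_a+x_b\le\frac{3-\sqrt3}{3}$.
   Context: $K_4^3\cup e$ is the $3$-graph on $\{1,\dots,7\}$ with edges $\{123,124,134,234,567\}$. For a $3$-graph $G$ on $[n]$, $\lambda(G,\vec x)=\sum_{e\in E(G)}\prod_{i\in e}x_i$ and $\lambda(G)=\max\{\lambda(G,\vec x):\sum_ix_i=1,x_i\ge0\}$; an optimum weight vector is a maximizer. $G$ is dense if $\lambda(G')<\lambda(G)$ for every proper subgraph $G'$. *)

theory Defs
  imports Complex_Main
begin

definition is_3graph :: "nat set \<Rightarrow> nat set set \<Rightarrow> bool" where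
  "is_3graph V E \<longleftrightarrow> (\<forall>e\<in>E. card e = 3 \<and> e \<subseteq> V)"

definition lagr_poly :: "nat set set \<Rightarrow> (nat \<Rightarrow> real) \<Rightarrow> real" where
  "lagr_poly E x = (\<Sum>e\<in>E. \<Prod>i\<in>e. x i)"

definition feasible :: "nat set \<Rightarrow> (nat \<Rightarrow> real) \<Rightarrow> bool" where
  "feasible V x \<longleftrightarrow> (\<forall>i\<in>V. 0 \<le> x i) \<and> (\<Sum>i\<in>V. x i) = 1"

definition lagrangian :: "nat set \<Rightarrow> nat set set \<Rightarrow> real" where
  "lagrangian V E = Sup {lagr_poly E x | x. feasible V x \<and> (\<forall>i. i \<notin> V \<longrightarrow> x i = 0)}"

definition optimum_weight :: "nat set \<Rightarrow> nat set set \<Rightarrow> (nat \<Rightarrow> real) \<Rightarrow> bool" where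
  "optimum_weight V E x \<longleftrightarrow> feasible V x \<and> lagr_poly E x = lagrangian V E"

definition dense :: "nat set \<Rightarrow> nat set set \<Rightarrow> bool" where
  "dense V E \<longleftrightarrow> (\<forall>V' E'. V' \<subseteq> V \<and> E' \<subseteq> E \<and> is_3graph V' E' \<and> (V', E') \<noteq> (V, E)
      \<longrightarrow> lagrangian V' E' < lagrangian V E)"

definition K43e :: "nat set set" where
  "K43e = {{1,2,3},{1,2,4},{1,3,4},{2,3,4},{5,6,7}}"

definition K43e_free :: "nat set \<Rightarrow> nat set set \<Rightarrow> bool" where
  "K43e_free V E \<longleftrightarrow> \<not> (\<exists>f. inj_on f {1..7} \<and> f ` {1..7} \<subseteq> V \<and> (\<forall>e\<in>K43e. f ` e \<in> E))"

end

theory Submission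
  imports Defs
begin

definition Dv :: "nat set set \<Rightarrow> (nat \<Rightarrow> real) \<Rightarrow> nat \<Rightarrow> real" where
  "Dv E x a = (\<Sum>e\<in>E. if a \<in> e then (\<Prod>i\<in>e-{a}. x i) else 0)"

lemma fin_graph:
  assumes "is_3graph V E" "finite V"
  shows "finite E" "\<And>e. e \<in> E \<Longrightarrow> finite e" "\<And>e. e \<in> E \<Longrightarrow> card e = 3" "\<And>e. e \<in> E \<Longrightarrow> e \<subseteq> V"
proof -
  show "finite E" using assms unfolding is_3graph_def
    by (meson Pow_iff finite_Pow_iff rev_finite_subset subsetI)
  show "\<And>e. e \<in> E \<Longrightarrow> finite e" "\<And>e. e \<in> E \<Longrightarrow> card e = 3" "\<And>e. e \<in> E \<Longrightarrow> e \<subseteq> V"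
    using assms unfolding is_3graph_def by (auto intro: card_ge_0_finite)
qed

lemma P_upd:
  assumes fin: "finite E" and fe: "\<And>e. e \<in> E \<Longrightarrow> finite e"
  shows "lagr_poly E (x(a := x a + t)) = lagr_poly E x + t * Dv E x a"
proof -
  have "\<And>e. e \<in> E \<Longrightarrow> (\<Prod>i\<in>e. (x(a := x a + t)) i) = (\<Prod>i\<in>e. x i) + t * (if a \<in> e then (\<Prod>i\<in>e-{a}. x i) else 0)"
  proof -
    fix e assume e: "e \<in> E"
    show "?thesis e"
    proof (cases "a \<in> e")
      case True
      have "(\<Prod>i\<in>e. (x(a := x a + t)) i) = (x a + t) * (\<Prod>i\<in>e-{a}. (x(a := x a + t)) i)"
        using prod.remove[OF fe[OF e] True, of "x(a := x a + t)"] by simp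
      also have "(\<Prod>i\<in>e-{a}. (x(a := x a + t)) i) = (\<Prod>i\<in>e-{a}. x i)"
        by (rule prod.cong) auto
      also have "(\<Prod>i\<in>e. x i) = x a * (\<Prod>i\<in>e-{a}. x i)"
        using prod.remove[OF fe[OF e] True, of x] by simp
      ultimately show ?thesis using True by (simp add: algebra_simps)
    next
      case False
      then show ?thesis by (auto intro!: prod.cong)
    qed
  qed
  then show ?thesis unfolding lagr_poly_def Dv_def
    by (simp add: sum.distrib sum_distrib_left)
qed

lemma lagr_bound:
  assumes "is_3graph V E" "finite V" "feasible V y"
  shows "lagr_poly E y \<le> real (card E)"
proof -
  note g = fin_graph[OF assms(1,2)]
  have y01: "\<And>i. i \<in> V \<Longrightarrow> 0 \<le> y i \<and> y i \<le> 1"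
  proof -
    fix i assume i: "i \<in> V"
    have "y i \<le> (\<Sum>j\<in>V. y j)"
      using assms(2,3) i unfolding feasible_def by (intro member_le_sum) auto
    then show "0 \<le> y i \<and> y i \<le> 1" using assms(3) i unfolding feasible_def by auto
  qed
  have "\<And>e. e \<in> E \<Longrightarrow> (\<Prod>i\<in>e. y i) \<le> 1"
    using g(4) y01 by (intro prod_le_1) auto
  then have "lagr_poly E y \<le> (\<Sum>e\<in>E. 1)" unfolding lagr_poly_def by (intro sum_mono) auto
  then show ?thesis by simp
qed

lemma le_lagr:
  assumes "is_3graph V E" "finite V" "feasible V y" "\<And>i. i \<notin> V \<Longrightarrow> y i = 0"
  shows "lagr_poly E y \<le> lagrangian V E"
  unfolding lagrangian_def
proof (rule cSup_upper)
  show "lagr_poly E y \<in> {lagr_poly E x |x. feasible V x \<and> (\<forall>i. i \<notin> V \<longrightarrow> x i = 0)}"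
    using assms by blast
  show "bdd_above {lagr_poly E x |x. feasible V x \<and> (\<forall>i. i \<notin> V \<longrightarrow> x i = 0)}"
    using lagr_bound[OF assms(1,2)] by (auto intro!: bdd_aboveI[where M="real (card E)"])
qed

lemma lagr_nonneg:
  assumes "is_3graph V E" "finite V" "feasible V x"
  shows "0 \<le> lagr_poly E x"
  using fin_graph(4)[OF assms(1,2)] assms(3) unfolding lagr_poly_def feasible_def
  by (intro sum_nonneg prod_nonneg) auto

lemma kkt:
  assumes G: "is_3graph V E" and fV: "finite V" and fx: "feasible V x"
    and opt: "lagr_poly E x = lagrangian V E" and aV: "a \<in> V" and xa: "x a > 0"
  shows "3 * lagr_poly E x \<le> Dv E x a"
proof -
  note g = fin_graph[OF G fV]
  define P where "P = lagr_poly E x"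
  define D where "D = Dv E x a"
  have P0: "0 \<le> P" using lagr_nonneg[OF G fV fx] P_def by simp
  have key: "P + t * D \<le> P * (1 + t)^3" if t1: "- x a < t" and t2: "t < 0" for t
  proof -
    have xa1: "x a \<le> 1"
    proof -
      have "x a \<le> (\<Sum>j\<in>V. x j)"
        using fV fx aV unfolding feasible_def by (intro member_le_sum) auto
      then show ?thesis using fx unfolding feasible_def by auto
    qed
    have tp: "1 + t > 0" using t1 xa1 by linarith
    define z where "z = x(a := x a + t)"
    define y where "y = (\<lambda>i. if i \<in> V then z i / (1 + t) else 0)"
    have sz: "(\<Sum>i\<in>V. z i) = 1 + t"
    proof -
      have "(\<Sum>i\<in>V. z i) = z a + (\<Sum>i\<in>V-{a}. z i)" using sum.remove[OF fV aV] by simp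
      also have "(\<Sum>i\<in>V-{a}. z i) = (\<Sum>i\<in>V-{a}. x i)" unfolding z_def by (rule sum.cong) auto
      also have "(\<Sum>i\<in>V-{a}. x i) = (\<Sum>i\<in>V. x i) - x a" using sum.remove[OF fV aV, of x] by linarith
      finally show ?thesis using fx unfolding feasible_def z_def by simp
    qed
    have fy: "feasible V y" unfolding feasible_def
    proof
      show "\<forall>i\<in>V. 0 \<le> y i" using fx tp t1 unfolding feasible_def y_def z_def by auto
      have "(\<Sum>i\<in>V. y i) = (\<Sum>i\<in>V. z i / (1 + t))" unfolding y_def by (rule sum.cong) auto
      also have "\<dots> = (\<Sum>i\<in>V. z i) / (1 + t)" by (simp add: sum_divide_distrib)
      finally show "(\<Sum>i\<in>V. y i) = 1" using sz tp by simp
    qed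
    have "lagr_poly E y = lagr_poly E z / (1 + t)^3"
    proof -
      have "\<And>e. e \<in> E \<Longrightarrow> (\<Prod>i\<in>e. y i) = (\<Prod>i\<in>e. z i) / (1 + t)^3"
      proof -
        fix e assume e: "e \<in> E"
        have "(\<Prod>i\<in>e. y i) = (\<Prod>i\<in>e. z i / (1 + t))"
          using g(4)[OF e] unfolding y_def by (intro prod.cong) auto
        also have "\<dots> = (\<Prod>i\<in>e. z i) / (\<Prod>i\<in>e. (1 + t))" by (simp add: prod_dividef)
        also have "(\<Prod>i\<in>e. (1 + t)) = (1 + t)^3" using g(3)[OF e] by simp
        finally show "(\<Prod>i\<in>e. y i) = (\<Prod>i\<in>e. z i) / (1 + t)^3" .
      qed
      then show ?thesis unfolding lagr_poly_def by (simp add: sum_divide_distrib)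
    qed
    moreover have "lagr_poly E y \<le> P"
      using le_lagr[OF G fV fy] opt P_def y_def by auto
    moreover have "lagr_poly E z = P + t * D"
      unfolding z_def P_def D_def using P_upd[OF g(1) g(2)] by simp
    ultimately have "(P + t * D) / (1 + t)^3 \<le> P" by simp
    then show ?thesis using tp by (simp add: divide_le_eq)
  qed
  show ?thesis
  proof (rule ccontr)
    assume "\<not> 3 * lagr_poly E x \<le> Dv E x a"
    then have dl: "D < 3 * P" using P_def D_def by simp
    define \<delta> where "\<delta> = 3 * P - D"
    have dp: "\<delta> > 0" using dl \<delta>_def by simp
    define t where "t = - min (x a / 2) (\<delta> / (6 * P + 1))"
    have t1: "- x a < t" and t2: "t < 0" using xa dp P0 unfolding t_def by auto
    have tb: "- t \<le> \<delta> / (6 * P + 1)" unfolding t_def by simp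
    have k: "P + t * D \<le> P * (1 + t)^3" using key[OF t1 t2] .
    have "t * D \<le> t * (P * (3 + 3 * t + t^2))"
      using k by (simp add: power3_eq_cube power2_eq_square algebra_simps)
    then have "P * (3 + 3 * t + t^2) \<le> D" using t2 by (simp add: mult_le_cancel_left)
    moreover have "P * (3 + 3 * t) \<le> P * (3 + 3 * t + t^2)" using P0 by (simp add: mult_left_mono)
    ultimately have "3 * P + 3 * P * t \<le> D" by (simp add: algebra_simps)
    moreover have "P * (- t) * 3 \<le> P * (\<delta> / (6 * P + 1)) * 3"
    proof -
      have "P * (- t) \<le> P * (\<delta> / (6 * P + 1))" by (rule mult_left_mono[OF tb P0])
      from mult_right_mono[OF this, of 3] show ?thesis by simp
    qed
    moreover have "P * (\<delta> / (6 * P + 1)) * 3 < \<delta>"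
    proof -
      have "P * \<delta> * 3 < \<delta> * (6 * P + 1)" using dp P0 by (simp add: algebra_simps) (smt (verit) mult_nonneg_nonneg)
      then show ?thesis using P0 by (simp add: field_simps)
    qed
    ultimately show False using \<delta>_def by (simp add: algebra_simps)
  qed
qed


lemma edge_ineq:
  fixes x :: "nat \<Rightarrow> real"
  assumes fe: "finite e" and ab: "a \<noteq> b" and nn: "\<forall>i\<in>e. 0 \<le> x i"
  shows "x a * (if a \<in> e then (\<Prod>i\<in>e-{a}. x i) else 0) + x b * (if b \<in> e then (\<Prod>i\<in>e-{b}. x i) else 0)
    \<le> (\<Prod>i\<in>e. x i) + x a * x b * (if a \<in> e \<and> b \<in> e then (\<Prod>i\<in>e-{a,b}. x i) else 0)"
proof -
  have p0: "0 \<le> (\<Prod>i\<in>e. x i)" using nn by (intro prod_nonneg) auto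
  have ra: "a \<in> e \<Longrightarrow> x a * (\<Prod>i\<in>e-{a}. x i) = (\<Prod>i\<in>e. x i)"
    using prod.remove[OF fe, of a x] by simp
  have rb: "b \<in> e \<Longrightarrow> x b * (\<Prod>i\<in>e-{b}. x i) = (\<Prod>i\<in>e. x i)"
    using prod.remove[OF fe, of b x] by simp
  have rab: "a \<in> e \<Longrightarrow> b \<in> e \<Longrightarrow> x a * x b * (\<Prod>i\<in>e-{a,b}. x i) = (\<Prod>i\<in>e. x i)"
  proof -
    assume a: "a \<in> e" and b: "b \<in> e"
    have "(\<Prod>i\<in>e-{a}. x i) = x b * (\<Prod>i\<in>e-{a}-{b}. x i)"
      using prod.remove[of "e-{a}" b x] fe b ab by simp
    moreover have "e-{a}-{b} = e-{a,b}" by auto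
    ultimately show ?thesis using ra[OF a] by (simp add: mult.assoc)
  qed
  show ?thesis
  proof (cases "a \<in> e")
    case a: True
    show ?thesis
    proof (cases "b \<in> e")
      case True
      then show ?thesis using a ra[OF a] rb[OF True] rab[OF a True] by simp
    next
      case False
      then show ?thesis using a ra[OF a] by simp
    qed
  next
    case a: False
    show ?thesis
    proof (cases "b \<in> e")
      case True
      then show ?thesis using a rb[OF True] by simp
    next
      case False
      then show ?thesis using a p0 by simp
    qed
  qed
qed

lemma L_bound:
  fixes x :: "nat \<Rightarrow> real"
  assumes G: "is_3graph V E" and fV: "finite V" and nn: "\<forall>i\<in>V. 0 \<le> x i"
    and aV: "a \<in> V" and bV: "b \<in> V" and ab: "a \<noteq> b"
  shows "(\<Sum>e\<in>E. if a \<in> e \<and> b \<in> e then (\<Prod>i\<in>e-{a,b}. x i) else 0) \<le> (\<Sum>i\<in>V-{a,b}. x i)"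
proof -
  note g = fin_graph[OF G fV]
  define Eab where "Eab = {e\<in>E. a \<in> e \<and> b \<in> e}"
  define h where "h = (\<lambda>e::nat set. the_elem (e - {a,b}))"
  have sing: "e - {a,b} = {h e}" if e: "e \<in> Eab" for e
  proof -
    have eE: "e \<in> E" and ae: "a \<in> e" and be: "b \<in> e" using e Eab_def by auto
    have sub: "{a,b} \<subseteq> e" using ae be by simp
    have c2: "card {a,b} = 2" using ab by simp
    have "card (e - {a,b}) = card e - card {a,b}" using card_Diff_subset[OF _ sub] by simp
    then have "card (e - {a,b}) = 1" using g(3)[OF eE] c2 by simp
    then have "card (e - {a,b}) = Suc 0" by simp
    then obtain c where "e - {a,b} = {c}" using card_1_singleton_iff[THEN iffD1] by blast
    then show ?thesis unfolding h_def by simp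
  qed
  have "(\<Sum>e\<in>E. if a \<in> e \<and> b \<in> e then (\<Prod>i\<in>e-{a,b}. x i) else 0) = (\<Sum>e\<in>Eab. (\<Prod>i\<in>e-{a,b}. x i))"
    unfolding Eab_def using g(1) by (simp add: sum.inter_filter)
  also have "\<dots> = (\<Sum>e\<in>Eab. x (h e))" using sing by (intro sum.cong) auto
  also have "\<dots> = (\<Sum>c\<in>h ` Eab. x c)"
  proof (rule sum.reindex[symmetric, unfolded comp_def])
    show "inj_on h Eab"
    proof
      fix e1 e2 assume e1: "e1 \<in> Eab" and e2: "e2 \<in> Eab" and eq: "h e1 = h e2"
      have "e1 = insert a (insert b (e1 - {a,b}))" using e1 Eab_def by auto
      moreover have "e2 = insert a (insert b (e2 - {a,b}))" using e2 Eab_def by auto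
      ultimately show "e1 = e2" using sing[OF e1] sing[OF e2] eq by metis
    qed
  qed
  also have "\<dots> \<le> (\<Sum>i\<in>V-{a,b}. x i)"
  proof (rule sum_mono2)
    show "finite (V - {a,b})" using fV by simp
    show "h ` Eab \<subseteq> V - {a,b}"
    proof
      fix c assume "c \<in> h ` Eab"
      then obtain e where e: "e \<in> Eab" and c: "c = h e" by auto
      have "c \<in> e - {a,b}" using sing[OF e] c by auto
      then show "c \<in> V - {a,b}" using g(4) e Eab_def by auto
    qed
    show "\<And>c. c \<in> V - {a,b} - h ` Eab \<Longrightarrow> 0 \<le> x c" using nn by auto
  qed
  finally show ?thesis .
qed

theorem claim5p4:
  fixes n :: nat and G :: "nat set set" and x :: "nat \<Rightarrow> real" and a b :: nat
  assumes "is_3graph {1..n} G"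
    and "dense {1..n} G"
    and "K43e_free {1..n} G"
    and "lagrangian {1..n} G > sqrt 3 / 18"
    and "optimum_weight {1..n} G x"
    and "a \<in> {1..n}" and "b \<in> {1..n}" and "a \<noteq> b"
  shows "x a + x b \<le> (3 - sqrt 3) / 3"
proof -
  define V where "V = {1..n}"
  have fV: "finite V" unfolding V_def by simp
  have Gg: "is_3graph V G" using assms(1) V_def by simp
  note g = fin_graph[OF Gg fV]
  have fx: "feasible V x" and opt: "lagr_poly G x = lagrangian V G"
    using assms(5) unfolding optimum_weight_def V_def by auto
  have aV: "a \<in> V" and bV: "b \<in> V" using assms(6,7) V_def by auto
  have nn: "\<forall>i\<in>V. 0 \<le> x i" using fx unfolding feasible_def by auto
  define P where "P = lagr_poly G x"
  have Pgt: "P > sqrt 3 / 18" using assms(4) opt P_def V_def by simp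
  have hv: "3 * P * x v \<le> x v * Dv G x v" if vV: "v \<in> V" for v
  proof (cases "x v > 0")
    case True
    then show ?thesis using kkt[OF Gg fV fx opt vV] P_def
      by (simp add: mult.commute mult_left_mono)
  next
    case False
    then have "x v = 0" using nn vV by force
    then show ?thesis by simp
  qed
  define L where "L = (\<Sum>e\<in>G. if a \<in> e \<and> b \<in> e then (\<Prod>i\<in>e-{a,b}. x i) else 0)"
  have edges: "x a * Dv G x a + x b * Dv G x b \<le> P + x a * x b * L"
  proof -
    have "x a * Dv G x a + x b * Dv G x b = (\<Sum>e\<in>G. x a * (if a \<in> e then (\<Prod>i\<in>e-{a}. x i) else 0) + x b * (if b \<in> e then (\<Prod>i\<in>e-{b}. x i) else 0))"
      unfolding Dv_def by (simp add: sum.distrib sum_distrib_left)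
    also have "\<dots> \<le> (\<Sum>e\<in>G. (\<Prod>i\<in>e. x i) + x a * x b * (if a \<in> e \<and> b \<in> e then (\<Prod>i\<in>e-{a,b}. x i) else 0))"
      using g(2,4) nn assms(8) by (intro sum_mono edge_ineq) auto
    also have "\<dots> = P + x a * x b * L"
      unfolding P_def L_def lagr_poly_def by (simp add: sum.distrib sum_distrib_left)
    finally show ?thesis .
  qed
  define s where "s = x a + x b"
  have Lb: "L \<le> 1 - s"
  proof -
    have "L \<le> (\<Sum>i\<in>V-{a,b}. x i)" unfolding L_def using L_bound[OF Gg fV nn aV bV assms(8)] .
    also have "(\<Sum>i\<in>V-{a,b}. x i) = (\<Sum>i\<in>V. x i) - (\<Sum>i\<in>{a,b}. x i)"
      using aV bV fV by (intro sum_diff) auto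
    finally show ?thesis using fx assms(8) unfolding feasible_def s_def by simp
  qed
  have xa0: "0 \<le> x a" and xb0: "0 \<le> x b" using nn aV bV by auto
  have s1: "s \<le> 1"
  proof -
    have "(\<Sum>i\<in>V-{a,b}. x i) \<ge> 0" using nn by (intro sum_nonneg) auto
    moreover have "(\<Sum>i\<in>V-{a,b}. x i) = (\<Sum>i\<in>V. x i) - (\<Sum>i\<in>{a,b}. x i)"
      using aV bV fV by (intro sum_diff) auto
    ultimately show ?thesis using fx assms(8) unfolding feasible_def s_def by simp
  qed
  have main: "3 * P * s \<le> P + x a * x b * (1 - s)"
  proof -
    have "3 * P * s \<le> x a * Dv G x a + x b * Dv G x b"
      using hv[OF aV] hv[OF bV] unfolding s_def by (simp add: algebra_simps)
    also have "\<dots> \<le> P + x a * x b * L" by (rule edges)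
    also have "x a * x b * L \<le> x a * x b * (1 - s)" using Lb xa0 xb0 by (simp add: mult_left_mono)
    finally show ?thesis by simp
  qed
  have am: "x a * x b \<le> s^2 / 4"
  proof -
    have "s^2 / 4 - x a * x b = (x a - x b)^2 / 4" unfolding s_def by (simp add: power2_eq_square algebra_simps)
    moreover have "(x a - x b)^2 \<ge> 0" by simp
    ultimately show ?thesis by linarith
  qed
  have main2: "P * (3 * s - 1) \<le> s^2 / 4 * (1 - s)"
  proof -
    have "x a * x b * (1 - s) \<le> s^2 / 4 * (1 - s)" using mult_right_mono[OF am, of "1 - s"] s1 by simp
    then show ?thesis using main by (simp add: algebra_simps)
  qed
  define r where "r = sqrt 3"
  have r2: "r * r = 3" unfolding r_def by simp
  have r0: "r > 0" unfolding r_def by simp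
  have rlt: "r < 2"
  proof (rule ccontr)
    assume "\<not> r < 2"
    then have "2 * 2 \<le> r * r" by (intro mult_mono) auto
    with r2 show False by simp
  qed
  have rgt: "r > 1" unfolding r_def by simp
  show ?thesis
  proof (rule ccontr)
    assume "\<not> x a + x b \<le> (3 - sqrt 3) / 3"
    then have sg: "s > 1 - r / 3" unfolding s_def r_def by simp
    have s3: "3 * s - 1 > 0" using sg rlt by simp
    have "r / 18 * (3 * s - 1) < P * (3 * s - 1)" using Pgt s3 r_def by (simp add: mult_strict_right_mono)
    with main2 have A: "r / 18 * (3 * s - 1) < s^2 / 4 * (1 - s)" by simp
    have q: "9 * s^2 - 3 * r * s + 3 * r + 3 > 0"
    proof -
      have "9 * s^2 - 3 * r * s + 3 * r + 3 = (3 * s - r / 2)^2 - r*r/4 + 3 * r + 3"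
        by (simp add: power2_eq_square algebra_simps)
      moreover have "(3 * s - r / 2)^2 \<ge> 0" by simp
      ultimately show ?thesis using r2 r0 by linarith
    qed
    have "9 * s^3 - 9 * s^2 + 6 * r * s - 2 * r = (s - (1 - r / 3)) * (9 * s^2 - 3 * r * s + 3 * r + 3)"
      using r2 by (simp add: power2_eq_square power3_eq_cube algebra_simps)
    moreover have "(s - (1 - r / 3)) * (9 * s^2 - 3 * r * s + 3 * r + 3) > 0"
      using sg q by simp
    ultimately have "9 * s^3 - 9 * s^2 + 6 * r * s - 2 * r > 0" by simp
    moreover have "r / 18 * (3 * s - 1) = (r * s) / 6 - r / 18" by (simp add: field_simps)
    moreover have "s^2 / 4 * (1 - s) = s^2 / 4 - s^3 / 4"
      by (simp add: right_diff_distrib power3_eq_cube power2_eq_square)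
    ultimately show False using A by linarith
  qed
qed

end
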